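(* Let $m:\mathbb{R}^3\to\mathbb{R}$ be given by $$m(\xi_1,\xi_2,\xi_3):=\frac{\xi_3}{(\xi_1^2\xi_2^2+\xi_3^2)^{1/2}}.$$ Then for all multi-indices $\alpha=(\alpha_1,\alpha_2,\alpha_3)$, $$|\partial^\alpha m(\xi)|\lesssim|\xi_1|^{-\alpha_1+\alpha_2}\,|(|\xi_1|\xi_2,\xi_3)|^{-\alpha_2-\alpha_3}$$ (so $m$ is a Fefferman–Pipher multiplier). Moreover, $\partial_{\xi_i}m\notin L^\infty$ for each $i=1,2,3$.
   Context: Here $|(|\xi_1|\xi_2,\xi_3)|=(\xi_1^2\xi_2^2+\xi_3^2)^{1/2}$ denotes the Euclidean norm of the vector $(|\xi_1|\xi_2,\xi_3)\in\mathbb{R}^2$, and the estimate is required at all points where $m$ is smooth (i.e. $(\xi_1\xi_2,\xi_3)\neq0$, $\xi_1\ne0$), with implicit constant depending on $\alpha$. A function satisfying these derivative estimates for all multi-indices is called a Fefferman–Pipher (Zygmund) multiplier. *)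

theory Defs
  imports "HOL-Analysis.Analysis"
begin

definition fp_m :: "real \<times> real \<times> real \<Rightarrow> real" where
  "fp_m \<xi> = (case \<xi> of (x1, x2, x3) \<Rightarrow> x3 / sqrt (x1\<^sup>2 * x2\<^sup>2 + x3\<^sup>2))"

definition pd :: "nat \<Rightarrow> (real \<times> real \<times> real \<Rightarrow> real) \<Rightarrow> real \<times> real \<times> real \<Rightarrow> real" where
  "pd i f = (\<lambda>(x1, x2, x3).
     if i = 1 then deriv (\<lambda>t. f (t, x2, x3)) x1
     else if i = 2 then deriv (\<lambda>t. f (x1, t, x3)) x2
     else deriv (\<lambda>t. f (x1, x2, t)) x3)"

definition dalpha :: "nat \<Rightarrow> nat \<Rightarrow> nat \<Rightarrow> (real \<times> real \<times> real \<Rightarrow> real) \<Rightarrow> real \<times> real \<times> real \<Rightarrow> real" where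
  "dalpha a1 a2 a3 f = (pd 1 ^^ a1) ((pd 2 ^^ a2) ((pd 3 ^^ a3) f))"

end

theory Submission
  imports Defs
begin


lemma dmono:
  fixes q :: "real \<Rightarrow> real"
  assumes "q t > 0" "(q has_real_derivative q') (at t)"
  shows "((\<lambda>t. t^n * inverse (sqrt (q t))^p) has_real_derivative
     (real n * t^(n-1) * inverse (sqrt (q t))^p - real p / 2 * q' * t^n * inverse (sqrt (q t))^(p+2))) (at t)"
  using assms
  apply (intro derivative_eq_intros)
  apply (rule refl | assumption | simp)+
  apply (cases p; simp)
  done


type_synonym tm = "real \<times> nat \<times> nat \<times> nat \<times> nat"

fun mono :: "tm \<Rightarrow> real \<times> real \<times> real \<Rightarrow> real" where
  "mono (c,i,j,k,p) (x1,x2,x3) = c * x1^i * x2^j * x3^k * inverse (sqrt (x1\<^sup>2 * x2\<^sup>2 + x3\<^sup>2))^p"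

definition evl :: "tm list \<Rightarrow> real \<times> real \<times> real \<Rightarrow> real" where
  "evl L x = sum_list (map (\<lambda>\<tau>. mono \<tau> x) L)"

fun D1 :: "tm \<Rightarrow> tm list" where
  "D1 (c,i,j,k,p) = (if i = 0 then [] else [(c * real i, i - 1, j, k, p)]) @ [(- c * real p, i + 1, j + 2, k, p + 2)]"
fun D2 :: "tm \<Rightarrow> tm list" where
  "D2 (c,i,j,k,p) = (if j = 0 then [] else [(c * real j, i, j - 1, k, p)]) @ [(- c * real p, i + 2, j + 1, k, p + 2)]"
fun D3 :: "tm \<Rightarrow> tm list" where
  "D3 (c,i,j,k,p) = (if k = 0 then [] else [(c * real k, i, j, k - 1, p)]) @ [(- c * real p, i, j, k + 1, p + 2)]"

lemma der1:
  assumes "t\<^sup>2 * x2\<^sup>2 + x3\<^sup>2 > 0"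
  shows "((\<lambda>t. mono \<tau> (t,x2,x3)) has_real_derivative evl (D1 \<tau>) (t,x2,x3)) (at t)"
proof -
  obtain c i j k p where tau: "\<tau> = (c,i,j,k,p)" by (cases \<tau>) auto
  let ?q = "\<lambda>t. t\<^sup>2 * x2\<^sup>2 + x3\<^sup>2"
  have q: "(?q has_real_derivative (2 * t * x2\<^sup>2)) (at t)"
    by (auto intro!: derivative_eq_intros)
  have "((\<lambda>t. (c * x2^j * x3^k) * (t^i * inverse (sqrt (?q t))^p)) has_real_derivative
     (c * x2^j * x3^k) * (real i * t^(i-1) * inverse (sqrt (?q t))^p - real p / 2 * (2 * t * x2\<^sup>2) * t^i * inverse (sqrt (?q t))^(p+2))) (at t)"
    by (intro DERIV_cmult dmono[OF assms q])
  moreover have "(c * x2^j * x3^k) * (real i * t^(i-1) * inverse (sqrt (?q t))^p - real p / 2 * (2 * t * x2\<^sup>2) * t^i * inverse (sqrt (?q t))^(p+2))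
     = evl (D1 \<tau>) (t,x2,x3)"
    unfolding tau evl_def by (cases i) (auto simp: algebra_simps power_Suc power2_eq_square)
  moreover have "(\<lambda>t. mono \<tau> (t,x2,x3)) = (\<lambda>t. (c * x2^j * x3^k) * (t^i * inverse (sqrt (?q t))^p))"
    unfolding tau by (auto simp: algebra_simps)
  ultimately show ?thesis by simp
qed

lemma der2:
  assumes "x1\<^sup>2 * t\<^sup>2 + x3\<^sup>2 > 0"
  shows "((\<lambda>t. mono \<tau> (x1,t,x3)) has_real_derivative evl (D2 \<tau>) (x1,t,x3)) (at t)"
proof -
  obtain c i j k p where tau: "\<tau> = (c,i,j,k,p)" by (cases \<tau>) auto
  let ?q = "\<lambda>t. x1\<^sup>2 * t\<^sup>2 + x3\<^sup>2"
  have q: "(?q has_real_derivative (2 * t * x1\<^sup>2)) (at t)"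
    by (auto intro!: derivative_eq_intros)
  have "((\<lambda>t. (c * x1^i * x3^k) * (t^j * inverse (sqrt (?q t))^p)) has_real_derivative
     (c * x1^i * x3^k) * (real j * t^(j-1) * inverse (sqrt (?q t))^p - real p / 2 * (2 * t * x1\<^sup>2) * t^j * inverse (sqrt (?q t))^(p+2))) (at t)"
    by (intro DERIV_cmult dmono[OF assms q])
  moreover have "(c * x1^i * x3^k) * (real j * t^(j-1) * inverse (sqrt (?q t))^p - real p / 2 * (2 * t * x1\<^sup>2) * t^j * inverse (sqrt (?q t))^(p+2))
     = evl (D2 \<tau>) (x1,t,x3)"
    unfolding tau evl_def by (cases j) (auto simp: algebra_simps power_Suc power2_eq_square)
  moreover have "(\<lambda>t. mono \<tau> (x1,t,x3)) = (\<lambda>t. (c * x1^i * x3^k) * (t^j * inverse (sqrt (?q t))^p))"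
    unfolding tau by (auto simp: algebra_simps)
  ultimately show ?thesis by simp
qed

lemma der3:
  assumes "x1\<^sup>2 * x2\<^sup>2 + t\<^sup>2 > 0"
  shows "((\<lambda>t. mono \<tau> (x1,x2,t)) has_real_derivative evl (D3 \<tau>) (x1,x2,t)) (at t)"
proof -
  obtain c i j k p where tau: "\<tau> = (c,i,j,k,p)" by (cases \<tau>) auto
  let ?q = "\<lambda>t. x1\<^sup>2 * x2\<^sup>2 + t\<^sup>2"
  have q: "(?q has_real_derivative (2 * t)) (at t)"
    by (auto intro!: derivative_eq_intros)
  have "((\<lambda>t. (c * x1^i * x2^j) * (t^k * inverse (sqrt (?q t))^p)) has_real_derivative
     (c * x1^i * x2^j) * (real k * t^(k-1) * inverse (sqrt (?q t))^p - real p / 2 * (2 * t) * t^k * inverse (sqrt (?q t))^(p+2))) (at t)"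
    by (intro DERIV_cmult dmono[OF assms q])
  moreover have "(c * x1^i * x2^j) * (real k * t^(k-1) * inverse (sqrt (?q t))^p - real p / 2 * (2 * t) * t^k * inverse (sqrt (?q t))^(p+2))
     = evl (D3 \<tau>) (x1,x2,t)"
    unfolding tau evl_def by (cases k) (auto simp: algebra_simps power_Suc power2_eq_square)
  moreover have "(\<lambda>t. mono \<tau> (x1,x2,t)) = (\<lambda>t. (c * x1^i * x2^j) * (t^k * inverse (sqrt (?q t))^p))"
    unfolding tau by (auto simp: algebra_simps)
  ultimately show ?thesis by simp
qed


definition UU :: "(real \<times> real \<times> real) set" where
  "UU = {(x1,x2,x3). x1 \<noteq> 0 \<and> (x1 * x2 \<noteq> 0 \<or> x3 \<noteq> 0)}"

lemma UU_pos: "(x1,x2,x3) \<in> UU \<Longrightarrow> x1\<^sup>2 * x2\<^sup>2 + x3\<^sup>2 > 0"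
  unfolding UU_def by (auto simp: power_mult_distrib[symmetric] add_pos_nonneg add_nonneg_pos)

lemma open_neq0: "open {t::real. t \<noteq> 0}"
proof -
  have "{t::real. t \<noteq> 0} = - {0}" by auto
  then show ?thesis by (simp add: open_Compl)
qed

lemma evl_Nil[simp]: "evl [] x = 0" by (simp add: evl_def)
lemma evl_Cons[simp]: "evl (a # L) x = mono a x + evl L x" by (simp add: evl_def)
lemma evl_append[simp]: "evl (L @ M) x = evl L x + evl M x" by (simp add: evl_def)

lemma derL1:
  assumes "t\<^sup>2 * x2\<^sup>2 + x3\<^sup>2 > 0"
  shows "((\<lambda>t. evl L (t,x2,x3)) has_real_derivative evl (concat (map D1 L)) (t,x2,x3)) (at t)"
  by (induction L) (auto intro!: derivative_eq_intros der1[OF assms])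

lemma derL2:
  assumes "x1\<^sup>2 * t\<^sup>2 + x3\<^sup>2 > 0"
  shows "((\<lambda>t. evl L (x1,t,x3)) has_real_derivative evl (concat (map D2 L)) (x1,t,x3)) (at t)"
  by (induction L) (auto intro!: derivative_eq_intros der2[OF assms])

lemma derL3:
  assumes "x1\<^sup>2 * x2\<^sup>2 + t\<^sup>2 > 0"
  shows "((\<lambda>t. evl L (x1,x2,t)) has_real_derivative evl (concat (map D3 L)) (x1,x2,t)) (at t)"
  by (induction L) (auto intro!: derivative_eq_intros der3[OF assms])

lemma pd1:
  assumes "\<forall>x\<in>UU. g x = evl L x"
  shows "\<forall>x\<in>UU. pd 1 g x = evl (concat (map D1 L)) x"
proof
  fix x assume x: "x \<in> UU"
  obtain x1 x2 x3 where xe: "x = (x1,x2,x3)" by (cases x) auto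
  let ?S = "{t::real. t \<noteq> 0 \<and> (t * x2 \<noteq> 0 \<or> x3 \<noteq> 0)}"
  have "open ?S" by (intro open_Collect_conj open_Collect_disj open_Collect_neq continuous_intros)
  moreover have "x1 \<in> ?S" using x xe by (auto simp: UU_def)
  moreover have "\<And>t. t \<in> ?S \<Longrightarrow> evl L (t,x2,x3) = g (t,x2,x3)" using assms by (auto simp: UU_def)
  ultimately have "((\<lambda>t. g (t,x2,x3)) has_real_derivative evl (concat (map D1 L)) (x1,x2,x3)) (at x1)"
    by (intro has_field_derivative_transform_within_open[OF derL1]) (use UU_pos x xe in auto)
  then show "pd 1 g x = evl (concat (map D1 L)) x"
    by (simp add: pd_def xe DERIV_imp_deriv)
qed

lemma pd2:
  assumes "\<forall>x\<in>UU. g x = evl L x"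
  shows "\<forall>x\<in>UU. pd 2 g x = evl (concat (map D2 L)) x"
proof
  fix x assume x: "x \<in> UU"
  obtain x1 x2 x3 where xe: "x = (x1,x2,x3)" by (cases x) auto
  let ?S = "{t::real. x1 \<noteq> 0 \<and> (x1 * t \<noteq> 0 \<or> x3 \<noteq> 0)}"
  have "open ?S" by (intro open_Collect_conj open_Collect_disj open_Collect_neq continuous_intros)
  moreover have "x2 \<in> ?S" using x xe by (auto simp: UU_def)
  moreover have "\<And>t. t \<in> ?S \<Longrightarrow> evl L (x1,t,x3) = g (x1,t,x3)" using assms by (auto simp: UU_def)
  ultimately have "((\<lambda>t. g (x1,t,x3)) has_real_derivative evl (concat (map D2 L)) (x1,x2,x3)) (at x2)"
    by (intro has_field_derivative_transform_within_open[OF derL2]) (use UU_pos x xe in auto)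
  then show "pd 2 g x = evl (concat (map D2 L)) x"
    by (simp add: pd_def xe DERIV_imp_deriv)
qed

lemma pd3:
  assumes "\<forall>x\<in>UU. g x = evl L x"
  shows "\<forall>x\<in>UU. pd 3 g x = evl (concat (map D3 L)) x"
proof
  fix x assume x: "x \<in> UU"
  obtain x1 x2 x3 where xe: "x = (x1,x2,x3)" by (cases x) auto
  let ?S = "{t::real. x1 \<noteq> 0 \<and> (x1 * x2 \<noteq> 0 \<or> t \<noteq> 0)}"
  have "open ?S" by (intro open_Collect_conj open_Collect_disj open_Collect_neq continuous_intros)
  moreover have "x3 \<in> ?S" using x xe by (auto simp: UU_def)
  moreover have "\<And>t. t \<in> ?S \<Longrightarrow> evl L (x1,x2,t) = g (x1,x2,t)" using assms by (auto simp: UU_def)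
  ultimately have "((\<lambda>t. g (x1,x2,t)) has_real_derivative evl (concat (map D3 L)) (x1,x2,x3)) (at x3)"
    by (intro has_field_derivative_transform_within_open[OF derL3]) (use UU_pos x xe in auto)
  then show "pd 3 g x = evl (concat (map D3 L)) x"
    by (simp add: pd_def xe DERIV_imp_deriv)
qed

definition inv_ok :: "int \<Rightarrow> int \<Rightarrow> tm \<Rightarrow> bool" where
  "inv_ok d1 d2 \<tau> = (case \<tau> of (c,i,j,k,p) \<Rightarrow> int i - int j = d1 \<and> int j + int k - int p = d2)"

definition rep :: "int \<Rightarrow> int \<Rightarrow> (real \<times> real \<times> real \<Rightarrow> real) \<Rightarrow> bool" where
  "rep d1 d2 g = (\<exists>L. (\<forall>\<tau>\<in>set L. inv_ok d1 d2 \<tau>) \<and> (\<forall>x\<in>UU. g x = evl L x))"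

lemma rep1: "rep d1 d2 g \<Longrightarrow> rep (d1 - 1) d2 (pd 1 g)"
  unfolding rep_def
proof (elim exE conjE)
  fix L assume L: "\<forall>\<tau>\<in>set L. inv_ok d1 d2 \<tau>" and g: "\<forall>x\<in>UU. g x = evl L x"
  have "\<forall>\<tau>\<in>set (concat (map D1 L)). inv_ok (d1 - 1) d2 \<tau>"
    using L by (force simp: inv_ok_def split: if_splits)
  with pd1[OF g] show "\<exists>L. (\<forall>\<tau>\<in>set L. inv_ok (d1 - 1) d2 \<tau>) \<and> (\<forall>x\<in>UU. pd 1 g x = evl L x)" by blast
qed

lemma rep2: "rep d1 d2 g \<Longrightarrow> rep (d1 + 1) (d2 - 1) (pd 2 g)"
  unfolding rep_def
proof (elim exE conjE)
  fix L assume L: "\<forall>\<tau>\<in>set L. inv_ok d1 d2 \<tau>" and g: "\<forall>x\<in>UU. g x = evl L x"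
  have "\<forall>\<tau>\<in>set (concat (map D2 L)). inv_ok (d1 + 1) (d2 - 1) \<tau>"
    using L by (force simp: inv_ok_def split: if_splits)
  with pd2[OF g] show "\<exists>L. (\<forall>\<tau>\<in>set L. inv_ok (d1 + 1) (d2 - 1) \<tau>) \<and> (\<forall>x\<in>UU. pd 2 g x = evl L x)" by blast
qed

lemma rep3: "rep d1 d2 g \<Longrightarrow> rep d1 (d2 - 1) (pd 3 g)"
  unfolding rep_def
proof (elim exE conjE)
  fix L assume L: "\<forall>\<tau>\<in>set L. inv_ok d1 d2 \<tau>" and g: "\<forall>x\<in>UU. g x = evl L x"
  have "\<forall>\<tau>\<in>set (concat (map D3 L)). inv_ok d1 (d2 - 1) \<tau>"
    using L by (force simp: inv_ok_def split: if_splits)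
  with pd3[OF g] show "\<exists>L. (\<forall>\<tau>\<in>set L. inv_ok d1 (d2 - 1) \<tau>) \<and> (\<forall>x\<in>UU. pd 3 g x = evl L x)" by blast
qed

lemma repn1: "rep d1 d2 g \<Longrightarrow> rep (d1 - int n) d2 ((pd 1 ^^ n) g)"
  by (induction n) (auto dest: rep1 simp: algebra_simps)
lemma repn2: "rep d1 d2 g \<Longrightarrow> rep (d1 + int n) (d2 - int n) ((pd 2 ^^ n) g)"
  by (induction n) (auto dest: rep2 simp: algebra_simps)
lemma repn3: "rep d1 d2 g \<Longrightarrow> rep d1 (d2 - int n) ((pd 3 ^^ n) g)"
  by (induction n) (auto dest: rep3 simp: algebra_simps)

lemma fp_m_evl: "fp_m x = evl [(1,0,0,1,1)] x"
  by (cases x) (simp add: fp_m_def divide_inverse)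

lemma rep_fp: "rep 0 0 fp_m"
  unfolding rep_def inv_ok_def using fp_m_evl by (intro exI[of _ "[(1,0,0,1,1)]"]) auto

lemma rep_dalpha: "rep (int a2 - int a1) (- int a3 - int a2) (dalpha a1 a2 a3 fp_m)"
  using repn1[OF repn2[OF repn3[OF rep_fp, of a3], of a2], of a1] unfolding dalpha_def
  by (simp add: algebra_simps)


lemma mono_bound:
  assumes x: "(x1,x2,x3) \<in> UU" and ok: "inv_ok d1 d2 \<tau>"
  shows "\<bar>mono \<tau> (x1,x2,x3)\<bar> \<le> \<bar>fst \<tau>\<bar> * \<bar>x1\<bar> powr d1 * sqrt ((\<bar>x1\<bar> * x2)\<^sup>2 + x3\<^sup>2) powr d2"
proof -
  obtain c i j k p where tau: "\<tau> = (c,i,j,k,p)" by (cases \<tau>) auto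
  define s where "s = sqrt ((\<bar>x1\<bar> * x2)\<^sup>2 + x3\<^sup>2)"
  define a where "a = \<bar>x1\<bar>"
  have sq: "sqrt (x1\<^sup>2 * x2\<^sup>2 + x3\<^sup>2) = s" unfolding s_def by (simp add: power_mult_distrib)
  have s0: "s > 0" using UU_pos[OF x] sq by (metis real_sqrt_gt_0_iff)
  have a0: "a > 0" using x by (auto simp: UU_def a_def)
  have d1: "d1 = int i - int j" and d2: "d2 = int j + int k - int p" using ok by (auto simp: inv_ok_def tau)
  have ax2: "a * \<bar>x2\<bar> \<le> s" unfolding s_def a_def
    by (metis abs_mult abs_abs real_sqrt_sum_squares_ge1 real_sqrt_abs power2_abs real_sqrt_le_iff abs_ge_self order_trans) 
  have ax3: "\<bar>x3\<bar> \<le> s" unfolding s_def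
    by (metis real_sqrt_sum_squares_ge2 real_sqrt_abs abs_ge_self order_trans power2_abs real_sqrt_le_iff add.commute) 
  have eq1: "a^i * \<bar>x2\<bar>^j = a powr d1 * (a * \<bar>x2\<bar>)^j"
    using a0 by (simp add: d1 powr_diff powr_realpow power_mult_distrib)
  have "\<bar>mono \<tau> (x1,x2,x3)\<bar> = \<bar>c\<bar> * (a^i * \<bar>x2\<bar>^j) * \<bar>x3\<bar>^k / s^p"
    using s0 by (simp add: tau sq a_def abs_mult power_abs divide_inverse power_inverse)
  also have "\<dots> = \<bar>c\<bar> * a powr d1 * ((a * \<bar>x2\<bar>)^j * \<bar>x3\<bar>^k / s^p)" by (simp add: eq1)
  also have "\<dots> \<le> \<bar>c\<bar> * a powr d1 * (s^j * s^k / s^p)"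
    using s0 a0 ax2 ax3
    by (intro mult_left_mono divide_right_mono mult_mono power_mono) auto
  also have "s^j * s^k / s^p = s powr d2"
    using s0 by (simp add: d2 powr_diff powr_add powr_realpow)
  finally show ?thesis by (simp add: tau a_def s_def)
qed

lemma evl_bound:
  assumes x: "(x1,x2,x3) \<in> UU" and ok: "\<forall>\<tau>\<in>set L. inv_ok d1 d2 \<tau>"
  shows "\<bar>evl L (x1,x2,x3)\<bar> \<le> sum_list (map (\<lambda>\<tau>. \<bar>fst \<tau>\<bar>) L) * \<bar>x1\<bar> powr d1 * sqrt ((\<bar>x1\<bar> * x2)\<^sup>2 + x3\<^sup>2) powr d2"
  using ok
proof (induction L)
  case Nil then show ?case by simp
next
  case (Cons a L)
  have "\<bar>evl (a # L) (x1,x2,x3)\<bar> \<le> \<bar>mono a (x1,x2,x3)\<bar> + \<bar>evl L (x1,x2,x3)\<bar>" by simp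
  also have "\<dots> \<le> \<bar>fst a\<bar> * \<bar>x1\<bar> powr d1 * sqrt ((\<bar>x1\<bar> * x2)\<^sup>2 + x3\<^sup>2) powr d2 +
     sum_list (map (\<lambda>\<tau>. \<bar>fst \<tau>\<bar>) L) * \<bar>x1\<bar> powr d1 * sqrt ((\<bar>x1\<bar> * x2)\<^sup>2 + x3\<^sup>2) powr d2"
    using Cons mono_bound[OF x] by (intro add_mono) auto
  finally show ?case by (simp add: algebra_simps)
qed

lemma part1: "\<exists>C :: real. \<forall>x1 x2 x3 :: real.
            x1 \<noteq> 0 \<and> (x1 * x2, x3) \<noteq> (0, 0) \<longrightarrow>
            \<bar>dalpha a1 a2 a3 fp_m (x1, x2, x3)\<bar>
              \<le> C * \<bar>x1\<bar> powr (- real a1 + real a2)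
                  * sqrt ((\<bar>x1\<bar> * x2)\<^sup>2 + x3\<^sup>2) powr (- real a2 - real a3)"
proof -
  obtain L where L: "\<forall>\<tau>\<in>set L. inv_ok (int a2 - int a1) (- int a3 - int a2) \<tau>"
     and g: "\<forall>x\<in>UU. dalpha a1 a2 a3 fp_m x = evl L x"
    using rep_dalpha unfolding rep_def by blast
  show ?thesis
  proof (intro exI allI impI)
    fix x1 x2 x3 :: real assume h: "x1 \<noteq> 0 \<and> (x1 * x2, x3) \<noteq> (0, 0)"
    then have x: "(x1,x2,x3) \<in> UU" by (auto simp: UU_def)
    show "\<bar>dalpha a1 a2 a3 fp_m (x1, x2, x3)\<bar>
              \<le> sum_list (map (\<lambda>\<tau>. \<bar>fst \<tau>\<bar>) L) * \<bar>x1\<bar> powr (- real a1 + real a2)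
                  * sqrt ((\<bar>x1\<bar> * x2)\<^sup>2 + x3\<^sup>2) powr (- real a2 - real a3)"
    proof -
      have B: "\<bar>evl L (x1,x2,x3)\<bar> \<le> sum_list (map (\<lambda>\<tau>. \<bar>fst \<tau>\<bar>) L) * \<bar>x1\<bar> powr (real_of_int (int a2 - int a1)) * sqrt ((\<bar>x1\<bar> * x2)\<^sup>2 + x3\<^sup>2) powr (real_of_int (- int a3 - int a2))"
        by (rule evl_bound[OF x L])
      have e1: "real_of_int (int a2 - int a1) = - real a1 + real a2" by simp
      have e2: "real_of_int (- int a3 - int a2) = - real a2 - real a3" by simp
      show ?thesis using B g x unfolding e1 e2 by simp
    qed
  qed
qed




lemma not_AE_ball:
  fixes c :: "real \<times> real \<times> real"
  assumes r: "r > 0" and nP: "\<forall>\<xi>\<in>ball c r. \<not> P \<xi>"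
  shows "\<not> (AE \<xi> in lborel. P \<xi>)"
proof
  assume "AE \<xi> in lborel. P \<xi>"
  then obtain N where N: "{x \<in> space lborel. \<not> P x} \<subseteq> N" "emeasure lborel N = 0" "N \<in> sets lborel"
    by (rule AE_E)
  have "ball c r \<subseteq> N" using N(1) nP by auto
  then have "emeasure lborel (ball c r) \<le> emeasure lborel N" using N(3) by (intro emeasure_mono)
  then have "emeasure lborel (ball c r) = 0" using N(2) by simp
  moreover have "emeasure lborel (ball c r) > 0"
    using r by (simp add: emeasure_ball)
  ultimately show False by simp
qed

lemma ball_coords:
  assumes "(y1,y2,y3) \<in> ball ((c1,c2,c3)::real\<times>real\<times>real) r"
  shows "\<bar>y1 - c1\<bar> < r" "\<bar>y2 - c2\<bar> < r" "\<bar>y3 - c3\<bar> < r"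
proof -
  have d: "dist (c1,c2,c3) (y1,y2,y3) < r" using assms by simp
  have "dist c1 y1 \<le> dist (c1,c2,c3) (y1,y2,y3)" using dist_fst_le[of "(c1,c2,c3)" "(y1,y2,y3)"] by simp
  then show "\<bar>y1 - c1\<bar> < r" using d by (simp add: dist_real_def abs_minus_commute)
  have "dist (c2,c3) (y2,y3) \<le> dist (c1,c2,c3) (y1,y2,y3)" using dist_snd_le[of "(c1,c2,c3)" "(y1,y2,y3)"] by simp
  moreover have "dist c2 y2 \<le> dist (c2,c3) (y2,y3)" using dist_fst_le[of "(c2,c3)" "(y2,y3)"] by simp
  moreover have "dist c3 y3 \<le> dist (c2,c3) (y2,y3)" using dist_snd_le[of "(c2,c3)" "(y2,y3)"] by simp
  ultimately show "\<bar>y2 - c2\<bar> < r" "\<bar>y3 - c3\<bar> < r" using d by (simp_all add: dist_real_def abs_minus_commute)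
qed

lemma big:
  fixes e num s :: real
  assumes e: "e > 0" and n: "num \<ge> e\<^sup>2" and s: "s > 0" and ss: "s\<^sup>2 < 25 * e\<^sup>2"
  shows "num / s^3 > 1 / (125 * e)"
proof -
  have "s\<^sup>2 < (5*e)\<^sup>2" using ss by (simp add: power_mult_distrib)
  then have "s < 5 * e" by (rule power2_less_imp_less) (use e in simp)
  then have s3: "s^3 < (5*e)^3" using s by (intro power_strict_mono) auto
  have "e\<^sup>2 / (5*e)^3 = e\<^sup>2 / (125 * e^3)" by (simp add: power_mult_distrib)
  also have "\<dots> = 1 / (125 * e)" using e by (simp add: power2_eq_square power3_eq_cube)
  finally have eq: "1 / (125 * e) = e\<^sup>2 / (5*e)^3" by simp
  have "e\<^sup>2 / (5*e)^3 < e\<^sup>2 / s^3" using s3 s e by (intro divide_strict_left_mono) auto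
  also have "\<dots> \<le> num / s^3" using n s by (intro divide_right_mono) auto
  finally show ?thesis using eq by simp
qed

lemma fp_evl_UU: "\<forall>x\<in>UU. fp_m x = evl [(1,0,0,1,1)] x" using fp_m_evl by simp

lemma eC:
  fixes C :: real
  defines "e \<equiv> 1 / (125 * (\<bar>C\<bar> + 1))"
  shows "e > 0" "e \<le> 1/125" "1 / (125 * e) > C"
proof -
  have p: "\<bar>C\<bar> + 1 \<ge> 1" by simp
  show "e > 0" unfolding e_def using p by simp
  show "e \<le> 1/125" unfolding e_def using p by (simp add: divide_simps)
  have "1 / (125 * e) = \<bar>C\<bar> + 1" unfolding e_def using p by simp
  then show "1 / (125 * e) > C" by linarith
qed



lemma sq_lt: "0 < (a::real) \<Longrightarrow> a < b \<Longrightarrow> a\<^sup>2 < b\<^sup>2"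
  by (rule power_strict_mono) auto

lemma p21: "\<not> (\<exists>C::real. AE \<xi> in lborel. \<bar>pd 1 fp_m \<xi>\<bar> \<le> C)"
proof
  assume "\<exists>C::real. AE \<xi> in lborel. \<bar>pd 1 fp_m \<xi>\<bar> \<le> C"
  then obtain C where C: "AE \<xi> in lborel. \<bar>pd 1 fp_m \<xi>\<bar> \<le> C" by blast
  define e where "e = 1 / (125 * (\<bar>C\<bar> + 1))"
  have e0: "e > 0" and e1: "e \<le> 1/125" and eC: "1 / (125 * e) > C" using eC[of C] unfolding e_def by auto
  have "\<forall>\<xi>\<in>ball ((3*e/2, 3/2, 3*e/2)::real\<times>real\<times>real) (e/2). \<not> \<bar>pd 1 fp_m \<xi>\<bar> \<le> C"
  proof
    fix \<xi> assume xi: "\<xi> \<in> ball ((3*e/2, 3/2, 3*e/2)::real\<times>real\<times>real) (e/2)"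
    obtain y1 y2 y3 where xe: "\<xi> = (y1,y2,y3)" by (cases \<xi>) auto
    have b: "\<bar>y1 - 3*e/2\<bar> < e/2" "\<bar>y2 - 3/2\<bar> < e/2" "\<bar>y3 - 3*e/2\<bar> < e/2"
      using ball_coords[OF xi[unfolded xe]] by auto
    have y1: "e < y1" "y1 < 2*e" using b(1) e1 by arith+
    have y2: "1 < y2" "y2 < 2" using b(2) e1 by arith+
    have y3: "e < y3" "y3 < 2*e" using b(3) e1 by arith+
    have U: "(y1,y2,y3) \<in> UU" using y1 y2 e0 by (auto simp: UU_def)
    define s where "s = sqrt (y1\<^sup>2 * y2\<^sup>2 + y3\<^sup>2)"
    have s0: "s > 0" using UU_pos[OF U] unfolding s_def by simp
    have "pd 1 fp_m \<xi> = evl (concat (map D1 [(1,0,0,1,1)])) (y1,y2,y3)"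
      using pd1[OF fp_evl_UU, rule_format, OF U] unfolding xe .
    also have "\<dots> = mono (-1,1,2,1,3) (y1,y2,y3)" by (simp del: mono.simps add: numeral_eq_Suc)
    also have "\<dots> = - (y1 * y2\<^sup>2 * y3 / s^3)"
      unfolding mono.simps s_def[symmetric] by (simp add: divide_inverse power_inverse)
    finally have "pd 1 fp_m \<xi> = - (y1 * y2\<^sup>2 * y3 / s^3)" .
    moreover have "y1 * y2\<^sup>2 * y3 > 0" using y1 y2 y3 e0 by simp
    ultimately have abs: "\<bar>pd 1 fp_m \<xi>\<bar> = y1 * y2\<^sup>2 * y3 / s^3" using s0 by simp
    have "e * 1 \<le> y1 * y2\<^sup>2" using y1 y2 e0
      by (intro mult_mono) (auto simp: one_le_power)
    then have num: "e\<^sup>2 \<le> y1 * y2\<^sup>2 * y3"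
      using y3 e0 by (simp add: power2_eq_square mult_mono less_imp_le)
    have "y1\<^sup>2 * y2\<^sup>2 < (2*e)\<^sup>2 * 2\<^sup>2"
      using y1 y2 e0 by (intro mult_strict_mono sq_lt) auto
    moreover have "y3\<^sup>2 < (2*e)\<^sup>2" using y3 e0 by (intro sq_lt) auto
    moreover have "s\<^sup>2 = y1\<^sup>2 * y2\<^sup>2 + y3\<^sup>2" unfolding s_def
      by (simp add: add_nonneg_nonneg)
    moreover have "(2*e)\<^sup>2 * 2\<^sup>2 = 16 * e\<^sup>2" "(2*e)\<^sup>2 = 4 * e\<^sup>2" by (simp_all add: power_mult_distrib)
    moreover have "e\<^sup>2 \<ge> 0" by simp
    ultimately have ss: "s\<^sup>2 < 25 * e\<^sup>2" by linarith
    have "1 / (125 * e) < \<bar>pd 1 fp_m \<xi>\<bar>" unfolding abs by (rule big[OF e0 num s0 ss])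
    then show "\<not> \<bar>pd 1 fp_m \<xi>\<bar> \<le> C" using eC by linarith
  qed
  then show False using not_AE_ball[of "e/2"] C e0 by auto
qed


lemma p22: "\<not> (\<exists>C::real. AE \<xi> in lborel. \<bar>pd 2 fp_m \<xi>\<bar> \<le> C)"
proof
  assume "\<exists>C::real. AE \<xi> in lborel. \<bar>pd 2 fp_m \<xi>\<bar> \<le> C"
  then obtain C where C: "AE \<xi> in lborel. \<bar>pd 2 fp_m \<xi>\<bar> \<le> C" by blast
  define e where "e = 1 / (125 * (\<bar>C\<bar> + 1))"
  have e0: "e > 0" and e1: "e \<le> 1/125" and eC: "1 / (125 * e) > C" using eC[of C] unfolding e_def by auto
  have "\<forall>\<xi>\<in>ball ((3/2, 3*e/2, 3*e/2)::real\<times>real\<times>real) (e/2). \<not> \<bar>pd 2 fp_m \<xi>\<bar> \<le> C"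
  proof
    fix \<xi> assume xi: "\<xi> \<in> ball ((3/2, 3*e/2, 3*e/2)::real\<times>real\<times>real) (e/2)"
    obtain y1 y2 y3 where xe: "\<xi> = (y1,y2,y3)" by (cases \<xi>) auto
    have b: "\<bar>y1 - 3/2\<bar> < e/2" "\<bar>y2 - 3*e/2\<bar> < e/2" "\<bar>y3 - 3*e/2\<bar> < e/2"
      using ball_coords[OF xi[unfolded xe]] by auto
    have y1: "1 < y1" "y1 < 2" using b(1) e1 by arith+
    have y2: "e < y2" "y2 < 2*e" using b(2) e1 by arith+
    have y3: "e < y3" "y3 < 2*e" using b(3) e1 by arith+
    have U: "(y1,y2,y3) \<in> UU" using y1 y2 e0 by (auto simp: UU_def)
    define s where "s = sqrt (y1\<^sup>2 * y2\<^sup>2 + y3\<^sup>2)"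
    have s0: "s > 0" using UU_pos[OF U] unfolding s_def by simp
    have "pd 2 fp_m \<xi> = evl (concat (map D2 [(1,0,0,1,1)])) (y1,y2,y3)"
      using pd2[OF fp_evl_UU, rule_format, OF U] unfolding xe .
    also have "\<dots> = mono (-1,2,1,1,3) (y1,y2,y3)" by (simp del: mono.simps add: numeral_eq_Suc)
    also have "\<dots> = - (y1\<^sup>2 * y2 * y3 / s^3)"
      unfolding mono.simps s_def[symmetric] by (simp add: divide_inverse power_inverse)
    finally have "pd 2 fp_m \<xi> = - (y1\<^sup>2 * y2 * y3 / s^3)" .
    moreover have "y1\<^sup>2 * y2 * y3 > 0" using y1 y2 y3 e0 by simp
    ultimately have abs: "\<bar>pd 2 fp_m \<xi>\<bar> = y1\<^sup>2 * y2 * y3 / s^3" using s0 by simp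
    have "1 * e \<le> y1\<^sup>2 * y2" using y1 y2 e0
      by (intro mult_mono) (auto simp: one_le_power)
    then have num: "e\<^sup>2 \<le> y1\<^sup>2 * y2 * y3"
      using y3 e0 by (simp add: power2_eq_square mult_mono less_imp_le)
    have "y1\<^sup>2 * y2\<^sup>2 < 2\<^sup>2 * (2*e)\<^sup>2"
      using y1 y2 e0 by (intro mult_strict_mono sq_lt) auto
    moreover have "y3\<^sup>2 < (2*e)\<^sup>2" using y3 e0 by (intro sq_lt) auto
    moreover have "s\<^sup>2 = y1\<^sup>2 * y2\<^sup>2 + y3\<^sup>2" unfolding s_def
      by (simp add: add_nonneg_nonneg)
    moreover have "2\<^sup>2 * (2*e)\<^sup>2 = 16 * e\<^sup>2" "(2*e)\<^sup>2 = 4 * e\<^sup>2" by (simp_all add: power_mult_distrib)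
    moreover have "e\<^sup>2 \<ge> 0" by simp
    ultimately have ss: "s\<^sup>2 < 25 * e\<^sup>2" by linarith
    have "1 / (125 * e) < \<bar>pd 2 fp_m \<xi>\<bar>" unfolding abs by (rule big[OF e0 num s0 ss])
    then show "\<not> \<bar>pd 2 fp_m \<xi>\<bar> \<le> C" using eC by linarith
  qed
  then show False using not_AE_ball[of "e/2"] C e0 by auto
qed


lemma p23: "\<not> (\<exists>C::real. AE \<xi> in lborel. \<bar>pd 3 fp_m \<xi>\<bar> \<le> C)"
proof
  assume "\<exists>C::real. AE \<xi> in lborel. \<bar>pd 3 fp_m \<xi>\<bar> \<le> C"
  then obtain C where C: "AE \<xi> in lborel. \<bar>pd 3 fp_m \<xi>\<bar> \<le> C" by blast
  define e where "e = 1 / (125 * (\<bar>C\<bar> + 1))"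
  have e0: "e > 0" and e1: "e \<le> 1/125" and eC: "1 / (125 * e) > C" using eC[of C] unfolding e_def by auto
  have "\<forall>\<xi>\<in>ball ((3/2, 3*e/2, e/2)::real\<times>real\<times>real) (e/2). \<not> \<bar>pd 3 fp_m \<xi>\<bar> \<le> C"
  proof
    fix \<xi> assume xi: "\<xi> \<in> ball ((3/2, 3*e/2, e/2)::real\<times>real\<times>real) (e/2)"
    obtain y1 y2 y3 where xe: "\<xi> = (y1,y2,y3)" by (cases \<xi>) auto
    have b: "\<bar>y1 - 3/2\<bar> < e/2" "\<bar>y2 - 3*e/2\<bar> < e/2" "\<bar>y3 - e/2\<bar> < e/2"
      using ball_coords[OF xi[unfolded xe]] by auto
    have y1: "1 < y1" "y1 < 2" using b(1) e1 by arith+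
    have y2: "e < y2" "y2 < 2*e" using b(2) e1 by arith+
    have y3: "0 < y3" "y3 < e" using b(3) e1 by arith+
    have U: "(y1,y2,y3) \<in> UU" using y1 y2 e0 by (auto simp: UU_def)
    define s where "s = sqrt (y1\<^sup>2 * y2\<^sup>2 + y3\<^sup>2)"
    have s0: "s > 0" using UU_pos[OF U] unfolding s_def by simp
    have s2: "s\<^sup>2 = y1\<^sup>2 * y2\<^sup>2 + y3\<^sup>2" unfolding s_def
      by (simp add: add_nonneg_nonneg)
    have "pd 3 fp_m \<xi> = evl (concat (map D3 [(1,0,0,1,1)])) (y1,y2,y3)"
      using pd3[OF fp_evl_UU, rule_format, OF U] unfolding xe .
    also have "\<dots> = mono (1,0,0,0,1) (y1,y2,y3) + mono (-1,0,0,2,3) (y1,y2,y3)"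
      by (simp del: mono.simps add: numeral_eq_Suc)
    also have "\<dots> = inverse s - y3\<^sup>2 * inverse s ^ 3"
      unfolding mono.simps s_def[symmetric] by simp
    also have "\<dots> = (s\<^sup>2 - y3\<^sup>2) / s^3"
      using s0 by (simp add: field_simps power2_eq_square power3_eq_cube)
    also have "\<dots> = y1\<^sup>2 * y2\<^sup>2 / s^3" by (simp add: s2)
    finally have abs: "\<bar>pd 3 fp_m \<xi>\<bar> = y1\<^sup>2 * y2\<^sup>2 / s^3" using s0 by simp
    have "1 * e\<^sup>2 \<le> y1\<^sup>2 * y2\<^sup>2" using y1 y2 e0
      by (intro mult_mono power_mono) (auto simp: one_le_power)
    then have num: "e\<^sup>2 \<le> y1\<^sup>2 * y2\<^sup>2" by simp
    have "y1\<^sup>2 * y2\<^sup>2 < 2\<^sup>2 * (2*e)\<^sup>2"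
      using y1 y2 e0 by (intro mult_strict_mono sq_lt) auto
    moreover have "y3\<^sup>2 < e\<^sup>2" using y3 e0 by (intro sq_lt) auto
    moreover have "2\<^sup>2 * (2*e)\<^sup>2 = 16 * e\<^sup>2" by (simp_all add: power_mult_distrib)
    moreover have "e\<^sup>2 \<ge> 0" by simp
    ultimately have ss: "s\<^sup>2 < 25 * e\<^sup>2" using s2 by linarith
    have "1 / (125 * e) < \<bar>pd 3 fp_m \<xi>\<bar>" unfolding abs by (rule big[OF e0 num s0 ss])
    then show "\<not> \<bar>pd 3 fp_m \<xi>\<bar> \<le> C" using eC by linarith
  qed
  then show False using not_AE_ball[of "e/2"] C e0 by auto
qed

theorem mainTheorem8:
  shows "(\<forall>a1 a2 a3 :: nat. \<exists>C :: real. \<forall>x1 x2 x3 :: real.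
            x1 \<noteq> 0 \<and> (x1 * x2, x3) \<noteq> (0, 0) \<longrightarrow>
            \<bar>dalpha a1 a2 a3 fp_m (x1, x2, x3)\<bar>
              \<le> C * \<bar>x1\<bar> powr (- real a1 + real a2)
                  * sqrt ((\<bar>x1\<bar> * x2)\<^sup>2 + x3\<^sup>2) powr (- real a2 - real a3))
       \<and> (\<forall>i \<in> {1, 2, 3 :: nat}. \<not> (\<exists>C :: real. AE \<xi> in lborel. \<bar>pd i fp_m \<xi>\<bar> \<le> C))"
  using part1 p21 p22 p23 by auto

end
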